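(* Let $v\in\mathrm{Box}(\Sigma)$ and let $\log_1,\dots,\log_n$ be arbitrary branches of the logarithm on the discs $B^v_1,\dots,B^v_n$. For $U\subset\mathbb C^n$ an open simply connected domain and $z\in U$, consider $\varphi(z,r)=\prod_{j=1}^n\frac{z_j^{\frac1{2\pi i}\log_jr_j}}{\Gamma(\frac1{2\pi i}\log_jr_j+1)}$, analytic on $U\times B^v$. Then the linear operator $\varphi(z,\mathcal R):(K_0(\mathbb P_\Sigma,\mathbb C))_v\to(K_0(\mathbb P_\Sigma,\mathbb C))_v$ is zero unless there exists a cone $\sigma\in\Sigma$ with $\sigma(v)\subset\sigma$ whose rays contain all $v_j\in\mathcal A$ for which $\frac1{2\pi i}\log_jy^v_j$ is not a nonnegative integer.
   Context: $N\cong\mathbb Z^d$, $M=\mathrm{Hom}(N,\mathbb Z)$, $\mathcal A=\{v_1,\dots,v_n\}\subset N$ generating $N$ with a homomorphism $\mathrm h:N\to\mathbb Z$, $\mathrm h(v_j)=1$; $\Sigma$ the simplicial fan supported on $\mathbb R_{\ge0}\mathrm{Conv}(\mathcal A)$ from a regular triangulation with vertices in $\mathcal A$, a stacky fan with the vectors $v_j$ on its rays. $K_0(\mathbb P_\Sigma,\mathbb C)$ is the complexified Grothendieck ring of the toric Deligne–Mumford stack $\mathbb P_\Sigma$ (Borisov–Chen–Smith), isomorphic to $\mathbb C[R_1^{\pm1},\dots,R_n^{\pm1}]$ modulo $\prod_jR_j^{\langle m,v_j\rangle}=1$ ($m\in M$) and $\prod_{j\in J}(1-R_j)=0$ whenever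 $\{v_j:j\in J\}$ do not generate a cone of $\Sigma$. $\mathrm{Box}(\Sigma)$: $v=\sum q^v_jv_j\in N$ with $0\le q^v_j<1$, $q^v_j=0$ unless $v_j$ spans a ray of a fixed maximal cone; $\sigma(v)$ the smallest cone containing $v$; $y^v_j=e^{2\pi iq^v_j}$. $K_0(\mathbb P_\Sigma,\mathbb C)$ is Artinian and is the direct sum of its localizations $(K_0(\mathbb P_\Sigma,\mathbb C))_v$ at the maximal ideals $(R_1-y^v_1,\dots,R_n-y^v_n)$, $v\in\mathrm{Box}(\Sigma)$. $\mathcal R_j$ is the operator of multiplication by $R_j$; on $(K_0)_v$ its spectrum is $\{y^v_j\}$. $B^v_j$ is an open disc of small radius centred at $y^v_j$ not containing $0$, $B^v=B^v_1\times\dots\times B^v_n$. For an analytic function $\phi$ on a neighbourhood of the joint spectrum, $\phi(\mathcal R)$ denotes the usual holomorphic functional calculus of commuting operators (equal to $P(\mathcal R)$ for any polynomial $P$ whose derivatives agree with those of $\phi$ at the spectrum up to the relevant indices). $z_j^a=e^{a(\log|z_j|+i\arg z_j)}$. *)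

theory Defs
  imports "HOL-Analysis.Analysis" "HOL-Library.Poly_Mapping"
begin

text \<open>Lattice N = ('d => int) for a finite type 'd (d = CARD('d)); the set
  A = {v_j} is indexed by a finite type 'a (n = CARD('a)).\<close>

definition pair :: "('d::finite \<Rightarrow> int) \<Rightarrow> ('d \<Rightarrow> int) \<Rightarrow> int" where
  "pair m u = (\<Sum>i\<in>UNIV. m i * u i)"

definition rcone :: "('a \<Rightarrow> ('d::finite \<Rightarrow> int)) \<Rightarrow> 'a set \<Rightarrow> ('d \<Rightarrow> real) set" where
  "rcone v F = {x. \<exists>c::'a \<Rightarrow> real. (\<forall>j\<in>F. c j \<ge> 0) \<and>
                    x = (\<lambda>i. \<Sum>j\<in>F. c j * real_of_int (v j i))}"

definition lin_indep_on :: "('a \<Rightarrow> ('d::finite \<Rightarrow> int)) \<Rightarrow> 'a set \<Rightarrow> bool" where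
  "lin_indep_on v S \<longleftrightarrow> (\<forall>c::'a \<Rightarrow> real.
      (\<forall>i. (\<Sum>j\<in>S. c j * real_of_int (v j i)) = 0) \<longrightarrow> (\<forall>j\<in>S. c j = 0))"

text \<open>The hypotheses on (A, h, Sigma): A generates N, h(v_j)=1 for a homomorphism h,
  T is the set of maximal simplices (as index sets) of a regular triangulation of
  Conv(A) with vertices in A; Sigma consists of the cones rcone v F, F a subset of some S in T.\<close>
definition stacky_setup :: "('a::finite \<Rightarrow> ('d::finite \<Rightarrow> int)) \<Rightarrow> 'a set set \<Rightarrow> bool" where
  "stacky_setup v T \<longleftrightarrow>
     inj v \<and>
     (\<forall>u::'d \<Rightarrow> int. \<exists>a::'a \<Rightarrow> int. u = (\<lambda>i. \<Sum>j\<in>UNIV. a j * v j i)) \<and>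
     (\<exists>h::'d \<Rightarrow> int. \<forall>j. pair h (v j) = 1) \<and>
     (\<forall>S\<in>T. card S = CARD('d) \<and> lin_indep_on v S) \<and>
     (\<Union>S\<in>T. rcone v S) = rcone v UNIV \<and>
     (\<forall>S\<in>T. \<forall>S'\<in>T. rcone v S \<inter> rcone v S' = rcone v (S \<inter> S')) \<and>
     (\<exists>\<omega>::'a \<Rightarrow> real. \<forall>S\<in>T. \<exists>\<psi>::'d \<Rightarrow> real.
         (\<forall>j\<in>S. (\<Sum>i\<in>UNIV. \<psi> i * real_of_int (v j i)) = \<omega> j) \<and>
         (\<forall>j. j \<notin> S \<longrightarrow> (\<Sum>i\<in>UNIV. \<psi> i * real_of_int (v j i)) < \<omega> j))"

definition fan_cones :: "('a \<Rightarrow> ('d::finite \<Rightarrow> int)) \<Rightarrow> 'a set set \<Rightarrow> ('d \<Rightarrow> real) set set" where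
  "fan_cones v T = {rcone v F | F S. S \<in> T \<and> F \<subseteq> S}"

text \<open>Box(Sigma): v = sum q_j v_j in N with 0 <= q_j < 1 and q_j = 0 off a maximal cone.\<close>
definition box_coeffs :: "('a::finite \<Rightarrow> ('d::finite \<Rightarrow> int)) \<Rightarrow> 'a set set \<Rightarrow> ('a \<Rightarrow> real) \<Rightarrow> bool" where
  "box_coeffs v T q \<longleftrightarrow>
     (\<forall>j. 0 \<le> q j \<and> q j < 1) \<and>
     (\<exists>S\<in>T. \<forall>j. j \<notin> S \<longrightarrow> q j = 0) \<and>
     (\<exists>u::'d \<Rightarrow> int. \<forall>i. (\<Sum>j\<in>UNIV. q j * real_of_int (v j i)) = real_of_int (u i))"

definition box_vec :: "('a::finite \<Rightarrow> ('d::finite \<Rightarrow> int)) \<Rightarrow> ('a \<Rightarrow> real) \<Rightarrow> ('d \<Rightarrow> real)" where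
  "box_vec v q = (\<lambda>i. \<Sum>j\<in>UNIV. q j * real_of_int (v j i))"

definition min_cone :: "('a \<Rightarrow> ('d::finite \<Rightarrow> int)) \<Rightarrow> 'a set set \<Rightarrow> ('d \<Rightarrow> real) \<Rightarrow> ('d \<Rightarrow> real) set" where
  "min_cone v T x = \<Inter>{C \<in> fan_cones v T. x \<in> C}"

definition on_ray :: "('a \<Rightarrow> ('d::finite \<Rightarrow> int)) \<Rightarrow> 'a \<Rightarrow> 'a set \<Rightarrow> bool" where
  "on_ray v j F \<longleftrightarrow> (\<exists>k\<in>F. \<exists>c::real. c > 0 \<and> (\<forall>i. real_of_int (v j i) = c * real_of_int (v k i)))"

definition yv :: "('a \<Rightarrow> real) \<Rightarrow> 'a \<Rightarrow> complex" where
  "yv q j = exp (2 * of_real pi * \<i> * of_real (q j))"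

text \<open>Laurent polynomial ring C[R_j^{+-1} : j in 'a], as finitely supported functions
  from exponent vectors to coefficients (multiplication = convolution).\<close>
type_synonym 'a lpoly = "('a \<Rightarrow>\<^sub>0 int) \<Rightarrow>\<^sub>0 complex"

definition lmono :: "('a \<Rightarrow>\<^sub>0 int) \<Rightarrow> 'a lpoly" where
  "lmono e = Poly_Mapping.single e 1"

definition lconst :: "complex \<Rightarrow> 'a lpoly" where
  "lconst c = Poly_Mapping.single 0 c"

definition Rvar :: "'a \<Rightarrow> 'a lpoly" where
  "Rvar j = lmono (Poly_Mapping.single j 1)"

definition gen_ideal :: "'a lpoly set \<Rightarrow> 'a lpoly set" where
  "gen_ideal G = {x. \<exists>F c. finite F \<and> F \<subseteq> G \<and> x = (\<Sum>g\<in>F. c g * g)}"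

definition K0_rels :: "('a::finite \<Rightarrow> ('d::finite \<Rightarrow> int)) \<Rightarrow> 'a set set \<Rightarrow> 'a lpoly set" where
  "K0_rels v T =
     {lmono (\<Sum>j\<in>UNIV. Poly_Mapping.single j (pair m (v j))) - 1 | m. True} \<union>
     {(\<Prod>j\<in>J. (1 - Rvar j)) | J. \<not> (\<exists>S\<in>T. J \<subseteq> S)}"

definition K0_max_ideal :: "('a::finite \<Rightarrow> ('d::finite \<Rightarrow> int)) \<Rightarrow> 'a set set \<Rightarrow> ('a \<Rightarrow> complex) \<Rightarrow> 'a lpoly set" where
  "K0_max_ideal v T y = gen_ideal (K0_rels v T \<union> {Rvar j - lconst (y j) | j. True})"

text \<open>The class of x in K_0 maps to 0 in the localization (K_0)_v, i.e. u*x = 0 in K_0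
  for some u outside the maximal ideal.\<close>
definition loc_zero :: "('a::finite \<Rightarrow> ('d::finite \<Rightarrow> int)) \<Rightarrow> 'a set set \<Rightarrow> ('a \<Rightarrow> complex) \<Rightarrow> 'a lpoly \<Rightarrow> bool" where
  "loc_zero v T y x \<longleftrightarrow> (\<exists>u. u \<notin> K0_max_ideal v T y \<and> u * x \<in> gen_ideal (K0_rels v T))"

definition taylor_prod :: "('a::finite \<Rightarrow> complex \<Rightarrow> complex) \<Rightarrow> ('a \<Rightarrow> complex) \<Rightarrow> nat \<Rightarrow> 'a lpoly" where
  "taylor_prod g y k = (\<Prod>j\<in>UNIV. \<Sum>a<k.
       lconst ((deriv ^^ a) (g j) (y j) / of_nat (fact a)) * (Rvar j - lconst (y j)) ^ a)"

text \<open>The operator phi(R) on (K_0)_v given by holomorphic functional calculus is zero: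
  since K_0 is Artinian, phi(R) on (K_0)_v is multiplication by the Taylor polynomial of
  phi at y^v of any sufficiently high order; an operator of multiplication by an
  element of the localization is zero iff that element is zero.\<close>
definition fc_op_zero :: "('a::finite \<Rightarrow> ('d::finite \<Rightarrow> int)) \<Rightarrow> 'a set set \<Rightarrow> ('a \<Rightarrow> complex) \<Rightarrow> ('a \<Rightarrow> complex \<Rightarrow> complex) \<Rightarrow> bool" where
  "fc_op_zero v T y g \<longleftrightarrow> (\<forall>\<^sub>F k in sequentially. loc_zero v T y (taylor_prod g y k))"

end

theory Submission imports Defs begin

definition wt :: "('a::finite \<Rightarrow> complex) \<Rightarrow> ('a \<Rightarrow>\<^sub>0 int) \<Rightarrow> complex" where
  "wt y e = (\<Prod>j\<in>UNIV. y j powi Poly_Mapping.lookup e j)"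

definition ev :: "('a::finite \<Rightarrow> complex) \<Rightarrow> 'a lpoly \<Rightarrow> complex" where
  "ev y p = (\<Sum>e\<in>Poly_Mapping.keys p. Poly_Mapping.lookup p e * wt y e)"

lemma ev_superset:
  assumes "finite A" "Poly_Mapping.keys p \<subseteq> A"
  shows "ev y p = (\<Sum>e\<in>A. Poly_Mapping.lookup p e * wt y e)"
  unfolding ev_def
  by (rule sum.mono_neutral_left) (use assms in \<open>auto simp: in_keys_iff\<close>)

lemma ev_add: "ev y (p + q) = ev y p + ev y q"
proof -
  let ?A = "Poly_Mapping.keys p \<union> Poly_Mapping.keys q \<union> Poly_Mapping.keys (p + q)"
  have "ev y (p + q) = (\<Sum>e\<in>?A. Poly_Mapping.lookup (p+q) e * wt y e)"
    by (rule ev_superset) auto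
  also have "\<dots> = (\<Sum>e\<in>?A. Poly_Mapping.lookup p e * wt y e) + (\<Sum>e\<in>?A. Poly_Mapping.lookup q e * wt y e)"
    by (simp add: lookup_add distrib_right sum.distrib)
  also have "\<dots> = ev y p + ev y q"
    by (subst (1 2) ev_superset[of ?A]) auto
  finally show ?thesis .
qed

lemma ev_zero[simp]: "ev y 0 = 0"
  by (simp add: ev_def)

lemma ev_uminus: "ev y (- p) = - ev y p"
  by (simp add: ev_def keys_minus sum_negf)

lemma ev_diff: "ev y (p - q) = ev y p - ev y q"
  using ev_add[of y p "- q"] ev_uminus[of y q] by simp

lemma ev_sum: "ev y (sum f A) = (\<Sum>a\<in>A. ev y (f a))"
  by (induction A rule: infinite_finite_induct) (auto simp: ev_add)

lemma ev_single: "ev y (Poly_Mapping.single e c) = c * wt y e"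
  by (subst ev_superset[of "{e}"]) auto

lemma decomp: "p = (\<Sum>e\<in>Poly_Mapping.keys p. Poly_Mapping.single e (Poly_Mapping.lookup p e))"
proof (rule poly_mapping_eqI)
  fix k
  show "Poly_Mapping.lookup p k = Poly_Mapping.lookup (\<Sum>e\<in>Poly_Mapping.keys p. Poly_Mapping.single e (Poly_Mapping.lookup p e)) k"
    by (auto simp: lookup_sum lookup_single when_def in_keys_iff)
qed

lemma wt_add:
  assumes "\<forall>j. y j \<noteq> 0"
  shows "wt y (e + e') = wt y e * wt y e'"
  using assms by (simp add: wt_def lookup_add power_int_add prod.distrib)

lemma wt_zero[simp]: "wt y 0 = 1"
  by (simp add: wt_def)

lemma ev_mult:
  assumes "\<forall>j. y j \<noteq> 0"
  shows "ev y (p * q) = ev y p * ev y q"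
proof -
  let ?P = "Poly_Mapping.keys p" and ?Q = "Poly_Mapping.keys q"
  have "p * q = (\<Sum>e\<in>?P. Poly_Mapping.single e (Poly_Mapping.lookup p e)) *
                (\<Sum>e\<in>?Q. Poly_Mapping.single e (Poly_Mapping.lookup q e))"
    by (subst (1) decomp[of p], subst (1) decomp[of q]) (rule refl)
  also have "\<dots> = (\<Sum>e\<in>?P. \<Sum>e'\<in>?Q. Poly_Mapping.single (e + e') (Poly_Mapping.lookup p e * Poly_Mapping.lookup q e'))"
    by (simp add: sum_product mult_single)
  finally have "ev y (p * q) = (\<Sum>e\<in>?P. \<Sum>e'\<in>?Q. (Poly_Mapping.lookup p e * Poly_Mapping.lookup q e') * wt y (e + e'))"
    by (simp add: ev_sum ev_single)
  also have "\<dots> = (\<Sum>e\<in>?P. \<Sum>e'\<in>?Q. (Poly_Mapping.lookup p e * wt y e) * (Poly_Mapping.lookup q e' * wt y e'))"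
    using assms by (simp add: wt_add mult_ac)
  also have "\<dots> = ev y p * ev y q"
    by (simp add: ev_def sum_product)
  finally show ?thesis .
qed

lemma ev_one[simp]: "ev y 1 = 1"
  using ev_single[of y 0 1] by simp

lemma ev_prod:
  assumes "\<forall>j. y j \<noteq> 0"
  shows "ev y (prod f A) = (\<Prod>a\<in>A. ev y (f a))"
  by (induction A rule: infinite_finite_induct) (auto simp: ev_mult[OF assms])

lemma ev_lconst[simp]: "ev y (lconst c) = c"
  by (simp add: lconst_def ev_single)

lemma ev_Rvar[simp]: "ev y (Rvar j) = y j"
proof -
  have "ev y (Rvar j) = (\<Prod>ja\<in>UNIV. y ja powi (if ja = j then 1 else 0))"
    by (simp add: Rvar_def lmono_def ev_single wt_def lookup_single when_def)
  also have "\<dots> = (\<Prod>ja\<in>UNIV. if ja = j then y ja else 1)"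
    by (rule prod.cong) auto
  also have "\<dots> = y j" by simp
  finally show ?thesis .
qed

lemma ev_gen_ideal:
  assumes "\<forall>j. y j \<noteq> 0" "\<forall>g\<in>G. ev y g = 0" "x \<in> gen_ideal G"
  shows "ev y x = 0"
  using assms by (auto simp: gen_ideal_def ev_sum ev_mult subset_iff)


lemma yv_ne0: "yv q j \<noteq> 0"
  by (simp add: yv_def)

lemma yv_zero: "q j = 0 \<Longrightarrow> yv q j = 1"
  by (simp add: yv_def)

lemma yv_ne1: "0 < q j \<Longrightarrow> q j < 1 \<Longrightarrow> yv q j \<noteq> 1"
proof -
  assume a: "0 < q j" "q j < 1"
  have "yv q j = exp (\<i> * complex_of_real (2 * pi * q j))"
    by (simp add: yv_def mult_ac)
  moreover have "exp (\<i> * complex_of_real (2 * pi * q j)) \<noteq> 1"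
    by (rule exp_i_ne_1) (use a in auto)
  ultimately show ?thesis by simp
qed

lemma ev_rel1:
  fixes v :: "'a::finite \<Rightarrow> ('d::finite \<Rightarrow> int)"
  assumes u: "\<forall>i. (\<Sum>j\<in>UNIV. q j * real_of_int (v j i)) = real_of_int (u i)"
  shows "ev (yv q) (lmono (\<Sum>j\<in>UNIV. Poly_Mapping.single j (pair m (v j))) - 1) = 0"
proof -
  let ?E = "\<Sum>j\<in>UNIV. Poly_Mapping.single j (pair m (v j))"
  have lk: "Poly_Mapping.lookup ?E k = pair m (v k)" for k
    by (simp add: lookup_sum lookup_single when_def)
  define N where "N = (\<Sum>i\<in>UNIV. m i * u i)"
  have sumN: "(\<Sum>k\<in>UNIV. real_of_int (pair m (v k)) * q k) = real_of_int N"
  proof -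
    have "(\<Sum>k\<in>UNIV. real_of_int (pair m (v k)) * q k)
        = (\<Sum>k\<in>UNIV. \<Sum>i\<in>UNIV. real_of_int (m i) * (q k * real_of_int (v k i)))"
      by (simp add: pair_def sum_distrib_right sum_distrib_left mult_ac)
    also have "\<dots> = (\<Sum>i\<in>UNIV. \<Sum>k\<in>UNIV. real_of_int (m i) * (q k * real_of_int (v k i)))"
      by (rule sum.swap)
    also have "\<dots> = (\<Sum>i\<in>UNIV. real_of_int (m i) * real_of_int (u i))"
      by (simp add: sum_distrib_left[symmetric] u)
    also have "\<dots> = real_of_int N" by (simp add: N_def)
    finally show ?thesis .
  qed
  have "wt (yv q) ?E = (\<Prod>k\<in>UNIV. exp (of_int (pair m (v k)) * (2 * of_real pi * \<i> * of_real (q k))))"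
    by (simp add: wt_def lk yv_def exp_power_int)
  also have "\<dots> = exp (\<Sum>k\<in>UNIV. of_int (pair m (v k)) * (2 * of_real pi * \<i> * of_real (q k)))"
    by (simp add: exp_sum)
  also have "(\<Sum>k\<in>UNIV. of_int (pair m (v k)) * (2 * of_real pi * \<i> * of_real (q k)))
      = 2 * of_real pi * \<i> * of_real (\<Sum>k\<in>UNIV. real_of_int (pair m (v k)) * q k)"
    by (simp add: sum_distrib_left mult_ac)
  also have "\<dots> = 2 * of_real pi * \<i> * of_real (real_of_int N)"
    by (simp only: sumN)
  also have "\<dots> = \<i> * (of_int N * (of_real pi * 2))"
    by (simp add: mult_ac)
  also have "exp \<dots> = 1" by (rule exp_2pi_1_int)
  finally show ?thesis
    by (simp add: ev_diff lmono_def ev_single)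
qed


lemma taylor_factor:
  assumes c0: "f y0 = 0" and y1: "y0 = 1"
  shows "(\<Sum>a<k. lconst ((deriv ^^ a) f y0 / of_nat (fact a)) * (Rvar j - lconst y0) ^ a)
       = (1 - Rvar j) * (- (\<Sum>a<k. lconst ((deriv ^^ a) f y0 / of_nat (fact a)) * (Rvar j - 1) ^ (a - 1)))"
proof -
  have l1: "lconst 1 = (1 :: 'a lpoly)" by (simp add: lconst_def)
  have l0: "lconst 0 = (0 :: 'a lpoly)" by (simp add: lconst_def)
  have "lconst ((deriv ^^ a) f y0 / of_nat (fact a)) * (Rvar j - 1) ^ a
      = (1 - Rvar j) * (- (lconst ((deriv ^^ a) f y0 / of_nat (fact a)) * (Rvar j - 1) ^ (a - 1)))" for a
  proof (cases a)
    case 0 then show ?thesis using c0 l0 by simp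
  next
    case (Suc b) then show ?thesis by (simp add: algebra_simps)
  qed
  then show ?thesis
    by (simp add: y1 l1 sum_distrib_left sum_negf)
qed


theorem proposition3p2:
  fixes v :: "'a::finite \<Rightarrow> ('d::finite \<Rightarrow> int)"
    and T :: "'a set set"
    and q :: "'a \<Rightarrow> real"
    and rad :: "'a \<Rightarrow> real"
    and L :: "'a \<Rightarrow> complex \<Rightarrow> complex"
    and z lz :: "'a \<Rightarrow> complex"
  assumes hsetup: "stacky_setup v T"
    and box: "box_coeffs v T q"
    and rho: "\<forall>j. rad j > 0 \<and> 0 \<notin> ball (yv q j) (rad j)"
    and logs: "\<forall>j. continuous_on (ball (yv q j) (rad j)) (L j) \<and>
                   (\<forall>w\<in>ball (yv q j) (rad j). exp (L j w) = w)"
    and zlog: "\<forall>j. exp (lz j) = z j"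
  shows "\<not> (\<exists>S\<in>T. \<exists>F\<subseteq>S. min_cone v T (box_vec v q) \<subseteq> rcone v F \<and>
              (\<forall>j. L j (yv q j) / (2 * of_real pi * \<i>) \<notin> \<nat> \<longrightarrow> on_ray v j F))
         \<longrightarrow> fc_op_zero v T (yv q)
               (\<lambda>j r. exp ((L j r / (2 * of_real pi * \<i>)) * lz j)
                      * rGamma (L j r / (2 * of_real pi * \<i>) + 1))"
proof
  assume H: "\<not> (\<exists>S\<in>T. \<exists>F\<subseteq>S. min_cone v T (box_vec v q) \<subseteq> rcone v F \<and>
              (\<forall>j. L j (yv q j) / (2 * of_real pi * \<i>) \<notin> \<nat> \<longrightarrow> on_ray v j F))"
  define y where "y = yv q"
  define lam where "lam j = L j (y j) / (2 * of_real pi * \<i>)" for j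
  define g where "g = (\<lambda>j r. exp ((L j r / (2 * of_real pi * \<i>)) * lz j)
                      * rGamma (L j r / (2 * of_real pi * \<i>) + 1))"
  from box obtain S0 u where q01: "\<forall>j. 0 \<le> q j \<and> q j < 1"
    and S0: "S0 \<in> T" "\<forall>j. j \<notin> S0 \<longrightarrow> q j = 0"
    and u: "\<forall>i. (\<Sum>j\<in>UNIV. q j * real_of_int (v j i)) = real_of_int (u i)"
    unfolding box_coeffs_def by blast
  have yne: "\<forall>j. y j \<noteq> 0" by (simp add: y_def yv_ne0)
  define P where "P = {j. q j \<noteq> 0}"
  define Z where "Z = {j. q j = 0 \<and> lam j \<notin> \<nat>}"
  define J0 where "J0 = P \<union> Z"
  have PZ: "P \<inter> Z = {}" by (auto simp: P_def Z_def)
  have notin: "\<not> (\<exists>S\<in>T. J0 \<subseteq> S)"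
  proof
    assume "\<exists>S\<in>T. J0 \<subseteq> S"
    then obtain S where S: "S \<in> T" "J0 \<subseteq> S" by blast
    have bv: "box_vec v q \<in> rcone v J0"
    proof -
      have "box_vec v q = (\<lambda>i. \<Sum>j\<in>J0. q j * real_of_int (v j i))"
      proof
        fix i
        show "box_vec v q i = (\<Sum>j\<in>J0. q j * real_of_int (v j i))"
          unfolding box_vec_def
          by (rule sum.mono_neutral_right) (auto simp: J0_def P_def)
      qed
      then show ?thesis unfolding rcone_def using q01 by blast
    qed
    have "rcone v J0 \<in> fan_cones v T"
      unfolding fan_cones_def using S by blast
    then have "min_cone v T (box_vec v q) \<subseteq> rcone v J0"
      unfolding min_cone_def using bv by blast
    moreover have "\<forall>j. L j (yv q j) / (2 * of_real pi * \<i>) \<notin> \<nat> \<longrightarrow> on_ray v j J0"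
    proof (intro allI impI)
      fix j assume "L j (yv q j) / (2 * of_real pi * \<i>) \<notin> \<nat>"
      then have "lam j \<notin> \<nat>" by (simp add: lam_def y_def)
      then have "j \<in> J0" unfolding J0_def P_def Z_def by blast
      then show "on_ray v j J0" unfolding on_ray_def
        by (intro bexI[of _ j] exI[of _ 1]) auto
    qed
    ultimately show False using H S by blast
  qed
  have evrels: "\<forall>r\<in>K0_rels v T. ev y r = 0"
  proof
    fix r assume "r \<in> K0_rels v T"
    then consider (a) m where "r = lmono (\<Sum>j\<in>UNIV. Poly_Mapping.single j (pair m (v j))) - 1"
      | (b) J where "r = (\<Prod>j\<in>J. (1 - Rvar j))" "\<not> (\<exists>S\<in>T. J \<subseteq> S)"
      unfolding K0_rels_def by blast
    then show "ev y r = 0"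
    proof cases
      case a then show ?thesis using ev_rel1[OF u] by (simp add: y_def)
    next
      case b
      then obtain j where j: "j \<in> J" "j \<notin> S0" using S0 by blast
      then have "y j = 1" using S0 by (simp add: y_def yv_zero)
      then have "(\<Prod>j\<in>J. 1 - y j) = 0" using j by (intro prod_zero) auto
      then show ?thesis using b by (simp add: ev_prod[OF yne] ev_diff)
    qed
  qed
  have evmax: "\<forall>r\<in>K0_rels v T \<union> {Rvar j - lconst (y j) | j. True}. ev y r = 0"
    using evrels by (auto simp: ev_diff)
  define U where "U = (\<Prod>j\<in>P. (1 - Rvar j) :: 'a lpoly)"
  have "ev y U = (\<Prod>j\<in>P. 1 - y j)" by (simp add: U_def ev_prod[OF yne] ev_diff)
  also have "\<dots> \<noteq> 0"
  proof -
    have "y j \<noteq> 1" if "j \<in> P" for j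
      using that q01[rule_format, of j] yv_ne1[of q j] by (auto simp: P_def y_def)
    then show ?thesis by (simp add: prod_zero_iff)
  qed
  finally have Unot: "U \<notin> K0_max_ideal v T y"
    using ev_gen_ideal[OF yne evmax] unfolding K0_max_ideal_def by blast
  have gz: "g j (y j) = 0" if "j \<in> Z" for j
  proof -
    have qj: "q j = 0" "lam j \<notin> \<nat>" using that by (auto simp: Z_def)
    have y1: "y j = 1" using qj by (simp add: y_def yv_zero)
    have "y j \<in> ball (yv q j) (rad j)" using rho by (simp add: y_def)
    then have "exp (L j (y j)) = 1" using logs y1 by (auto simp: y_def)
    then obtain n where Re: "Re (L j (y j)) = 0" and Im: "Im (L j (y j)) = real_of_int (2 * n) * pi"
      by (auto simp: exp_eq_1)
    have "L j (y j) = 2 * of_real pi * \<i> * of_int n"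
      using Re Im by (simp add: complex_eq_iff)
    then have ln: "lam j = of_int n" by (simp add: lam_def)
    have "n < 0"
    proof (rule ccontr)
      assume "\<not> n < 0"
      then have "lam j = of_nat (nat n)" using ln by simp
      then show False using qj(2) by simp
    qed
    then have "lam j + 1 \<in> \<int>\<^sub>\<le>\<^sub>0" using ln
      by (metis of_int_1 of_int_add of_int_in_nonpos_Ints_iff zless_imp_add1_zle add_le_same_cancel2 le_less)
    then show ?thesis by (simp add: g_def lam_def rGamma_nonpos_Int)
  qed
  define Tj where "Tj j k = (\<Sum>a<k. lconst ((deriv ^^ a) (g j) (y j) / of_nat (fact a)) * (Rvar j - lconst (y j)) ^ a)" for j k
  define Qj where "Qj j k = - (\<Sum>a<k. lconst ((deriv ^^ a) (g j) (y j) / of_nat (fact a)) * (Rvar j - 1) ^ (a - 1))" for j k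
  have TQ: "Tj j k = (1 - Rvar j) * Qj j k" if "j \<in> Z" for j k
    unfolding Tj_def Qj_def
    by (rule taylor_factor) (use gz[OF that] that in \<open>auto simp: Z_def y_def yv_zero\<close>)
  show "fc_op_zero v T (yv q) g"
    unfolding fc_op_zero_def
  proof (rule always_eventually, rule allI)
    fix k
    have tp: "taylor_prod g y k = (\<Prod>j\<in>UNIV. Tj j k)"
      by (simp add: taylor_prod_def Tj_def)
    define W where "W = (\<Prod>j\<in>Z. Qj j k) * (\<Prod>j\<in>UNIV - Z. Tj j k)"
    define G0 where "G0 = (\<Prod>j\<in>J0. (1 - Rvar j) :: 'a lpoly)"
    have "(\<Prod>j\<in>UNIV. Tj j k) = (\<Prod>j\<in>Z. Tj j k) * (\<Prod>j\<in>UNIV - Z. Tj j k)"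
      by (metis (no_types, lifting) Diff_disjoint Diff_partition finite prod.union_disjoint top_greatest mult.commute)
    also have "(\<Prod>j\<in>Z. Tj j k) = (\<Prod>j\<in>Z. 1 - Rvar j) * (\<Prod>j\<in>Z. Qj j k)"
      by (simp add: TQ prod.distrib)
    finally have "U * taylor_prod g y k = U * (\<Prod>j\<in>Z. 1 - Rvar j) * W"
      by (simp add: tp W_def mult_ac)
    also have "U * (\<Prod>j\<in>Z. 1 - Rvar j) = G0"
      unfolding U_def G0_def J0_def by (rule prod.union_disjoint[symmetric]) (use PZ in auto)
    finally have eq: "U * taylor_prod g y k = W * G0" by (simp add: mult_ac)
    have "G0 \<in> K0_rels v T" unfolding K0_rels_def G0_def using notin by blast
    then have "W * G0 \<in> gen_ideal (K0_rels v T)"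
      unfolding gen_ideal_def by (intro CollectI exI[of _ "{G0}"] exI[of _ "\<lambda>_. W"]) auto
    then show "loc_zero v T (yv q) (taylor_prod g (yv q) k)"
      unfolding loc_zero_def using Unot eq by (auto simp: y_def)
  qed
qed

end
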